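(* Let $G=(V,E)$ be a unit-weight graph and let $\theta\in[0,1]^V$ be an arbitrary stable solution. Then there exists a distribution $\mathcal{D}$ supported on independent sets of $G$ such that $\Pr_{S\sim\mathcal{D}}[v\in S]=\theta_v$ for every $v\in V$.
   Context: A unit-weight graph corresponds to a symmetric matrix $W\in\{0,1\}^{V\times V}$ with $W_{v,v}=1$, where $\{u,v\}\in E$ iff $u\ne v$ and $W_{u,v}=1$. A vector $\theta\in\mathbb{R}_{\ge0}^V$ is feasible if $W\theta\ge\mathbf 1$ coordinatewise, and is a stable solution if it is feasible and for every $v\in V$, $\theta_v=\min\{x\ge0:x+\sum_{u:\{u,v\}\in E}\theta_u\ge1\}$. *)

theory Defs
  imports "HOL-Probability.Probability"
begin

definition unit_weight_graph :: "'a set \<Rightarrow> ('a \<Rightarrow> 'a \<Rightarrow> real) \<Rightarrow> bool" where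
  "unit_weight_graph V W \<longleftrightarrow> finite V \<and>
     (\<forall>u\<in>V. \<forall>v\<in>V. W u v \<in> {0, 1} \<and> W u v = W v u) \<and> (\<forall>v\<in>V. W v v = 1)"

definition adj :: "'a set \<Rightarrow> ('a \<Rightarrow> 'a \<Rightarrow> real) \<Rightarrow> 'a \<Rightarrow> 'a \<Rightarrow> bool" where
  "adj V W u v \<longleftrightarrow> u \<in> V \<and> v \<in> V \<and> u \<noteq> v \<and> W u v = 1"

definition feasible :: "'a set \<Rightarrow> ('a \<Rightarrow> 'a \<Rightarrow> real) \<Rightarrow> ('a \<Rightarrow> real) \<Rightarrow> bool" where
  "feasible V W \<theta> \<longleftrightarrow> (\<forall>v\<in>V. 0 \<le> \<theta> v) \<and> (\<forall>v\<in>V. (\<Sum>u\<in>V. W v u * \<theta> u) \<ge> 1)"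

definition stable_solution :: "'a set \<Rightarrow> ('a \<Rightarrow> 'a \<Rightarrow> real) \<Rightarrow> ('a \<Rightarrow> real) \<Rightarrow> bool" where
  "stable_solution V W \<theta> \<longleftrightarrow> feasible V W \<theta> \<and>
     (\<forall>v\<in>V. \<theta> v = Inf {x::real. 0 \<le> x \<and> x + (\<Sum>u\<in>{u\<in>V. adj V W u v}. \<theta> u) \<ge> 1})"

definition independent_set :: "'a set \<Rightarrow> ('a \<Rightarrow> 'a \<Rightarrow> real) \<Rightarrow> 'a set \<Rightarrow> bool" where
  "independent_set V W S \<longleftrightarrow> S \<subseteq> V \<and> (\<forall>u\<in>S. \<forall>v\<in>S. \<not> adj V W u v)"

end

theory Submission
  imports Defs "HOL-Probability.Product_PMF"
begin

lemma greedy: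
  fixes F :: "'a set" and R :: "'a \<Rightarrow> 'a \<Rightarrow> bool" and \<theta> :: "'a \<Rightarrow> real"
  assumes "finite F"
  shows "(\<forall>v\<in>F. 0 \<le> \<theta> v) \<Longrightarrow>
    (\<forall>v\<in>F. \<theta> v = 0 \<or> \<theta> v + (\<Sum>u\<in>{u\<in>F. R u v}. \<theta> u) \<le> 1) \<Longrightarrow>
    (\<forall>u v. R u v = R v u) \<Longrightarrow> (\<forall>u. \<not> R u u) \<Longrightarrow>
    \<exists>D :: 'a set pmf. (\<forall>S\<in>set_pmf D. S \<subseteq> F \<and> (\<forall>u\<in>S. \<forall>v\<in>S. \<not> R u v)) \<and>
      (\<forall>v\<in>F. measure_pmf.prob D {S. v \<in> S} = \<theta> v)"
  using assms
proof (induction F rule: finite_induct)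
  case empty
  show ?case by (intro exI[of _ "return_pmf {}"]) auto
next
  case (insert x F)
  have nn: "\<forall>v\<in>F. 0 \<le> \<theta> v" using insert.prems by auto
  have c: "\<forall>v\<in>F. \<theta> v = 0 \<or> \<theta> v + (\<Sum>u\<in>{u\<in>F. R u v}. \<theta> u) \<le> 1"
  proof
    fix v assume v: "v \<in> F"
    have "(\<Sum>u\<in>{u\<in>F. R u v}. \<theta> u) \<le> (\<Sum>u\<in>{u\<in>insert x F. R u v}. \<theta> u)"
      using insert.hyps insert.prems(1) by (intro sum_mono2) auto
    then show "\<theta> v = 0 \<or> \<theta> v + (\<Sum>u\<in>{u\<in>F. R u v}. \<theta> u) \<le> 1"
      using insert.prems(2) v by force
  qed
  obtain D where D1: "\<forall>S\<in>set_pmf D. S \<subseteq> F \<and> (\<forall>u\<in>S. \<forall>v\<in>S. \<not> R u v)"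
    and D2: "\<forall>v\<in>F. measure_pmf.prob D {S. v \<in> S} = \<theta> v"
    using insert.IH[OF nn c insert.prems(3,4)] by blast
  define N where "N = {u\<in>F. R u x}"
  define A where "A = {S. \<forall>u\<in>N. u \<notin> S}"
  define p where "p = measure_pmf.prob D A"
  define q where "q = \<theta> x / p"
  define P where "P = pair_pmf D (bernoulli_pmf q)"
  define g where "g = (\<lambda>(S, b). if b \<and> S \<in> A then insert x S else S)"
  have Nsub: "N \<subseteq> F" unfolding N_def by auto
  have finN: "finite N" using insert.hyps Nsub finite_subset by blast
  have "measure_pmf.prob D (- A) = measure_pmf.prob D (\<Union>u\<in>N. {S. u \<in> S})"
    unfolding A_def by (rule arg_cong[where f="measure_pmf.prob D"]) auto
  also have "\<dots> \<le> (\<Sum>u\<in>N. measure_pmf.prob D {S. u \<in> S})"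
    by (rule measure_pmf.finite_measure_subadditive_finite) (use finN in auto)
  also have "\<dots> = (\<Sum>u\<in>N. \<theta> u)" using D2 Nsub by (intro sum.cong) auto
  finally have pA: "1 - p \<le> (\<Sum>u\<in>N. \<theta> u)"
    unfolding p_def using measure_pmf.prob_compl[of A D] by (simp add: Compl_eq_Diff_UNIV)
  have p01: "0 \<le> p" "p \<le> 1" unfolding p_def by auto
  have q01: "0 \<le> q \<and> q \<le> 1 \<and> q * p = \<theta> x"
  proof (cases "\<theta> x = 0")
    case True then show ?thesis unfolding q_def by simp
  next
    case False
    have eqN: "{u\<in>insert x F. R u x} = N" using insert.prems(4) unfolding N_def by auto
    then have "\<theta> x + (\<Sum>u\<in>N. \<theta> u) \<le> 1"
      using insert.prems(2) False by (metis insertI1)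
    then have le: "\<theta> x \<le> p" using pA by linarith
    have pos: "0 < \<theta> x" using False insert.prems(1) by auto
    then show ?thesis using le unfolding q_def by (auto simp: field_simps)
  qed
  show ?case
  proof (rule exI[of _ "map_pmf g P"], rule conjI; intro ballI)
    fix T assume "T \<in> set_pmf (map_pmf g P)"
    then obtain S b where Sb: "S \<in> set_pmf D" "T = g (S, b)"
      unfolding P_def by auto
    show "T \<subseteq> insert x F \<and> (\<forall>u\<in>T. \<forall>v\<in>T. \<not> R u v)"
    proof (cases "b \<and> S \<in> A")
      case True
      then have T: "T = insert x S" using Sb unfolding g_def by auto
      have "\<forall>u\<in>S. \<not> R u x" using True D1 Sb(1) unfolding A_def N_def by blast
      then show ?thesis using T D1 Sb(1) insert.prems(3,4) by blast
    next
      case False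
      then have T: "T = S" using Sb unfolding g_def by auto
      then show ?thesis using D1 Sb(1) by blast
    qed
  next
    fix v assume v: "v \<in> insert x F"
    show "measure_pmf.prob (map_pmf g P) {S. v \<in> S} = \<theta> v"
    proof (cases "v = x")
      case True
      have "g -` {S. v \<in> S} \<inter> set_pmf P = ((A \<inter> set_pmf D) \<times> {True}) \<inter> set_pmf P"
        using True D1 insert.hyps(2) unfolding P_def g_def by (auto split: if_splits)
      then have "measure_pmf.prob (map_pmf g P) {S. v \<in> S}
          = measure_pmf.prob P ((A \<inter> set_pmf D) \<times> {True})"
        by (metis measure_Int_set_pmf measure_map_pmf)
      also have "\<dots> = measure_pmf.prob D (A \<inter> set_pmf D) * measure_pmf.prob (bernoulli_pmf q) {True}"
        unfolding P_def by (rule measure_pmf_prob_product) (auto intro: countable_subset)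
      also have "\<dots> = p * q" unfolding p_def
        using q01 by (simp add: measure_Int_set_pmf measure_pmf_single)
      finally show ?thesis using q01 True by (simp add: mult.commute)
    next
      case False
      then have vF: "v \<in> F" using v by auto
      have "g -` {S. v \<in> S} = fst -` {S. v \<in> S}"
        using False unfolding g_def by (auto split: if_splits)
      then have "measure_pmf.prob (map_pmf g P) {S. v \<in> S}
          = measure_pmf.prob (map_pmf fst P) {S. v \<in> S}" by simp
      also have "\<dots> = \<theta> v" unfolding P_def map_fst_pair_pmf using D2 vF by simp
      finally show ?thesis .
    qed
  qed
qed

theorem lemma3p6:
  fixes V :: "'a set" and W :: "'a \<Rightarrow> 'a \<Rightarrow> real" and \<theta> :: "'a \<Rightarrow> real"
  assumes "unit_weight_graph V W"
    and "\<forall>v\<in>V. \<theta> v \<in> {0..1}"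
    and "stable_solution V W \<theta>"
  shows "\<exists>D :: 'a set pmf. (\<forall>S\<in>set_pmf D. independent_set V W S) \<and>
           (\<forall>v\<in>V. measure_pmf.prob D {S. v \<in> S} = \<theta> v)"
proof -
  have fin: "finite V" using assms(1) unfolding unit_weight_graph_def by auto
  have sym: "\<forall>u v. adj V W u v = adj V W v u"
    using assms(1) unfolding unit_weight_graph_def adj_def by auto
  have irr: "\<forall>u. \<not> adj V W u u" unfolding adj_def by auto
  have nn: "\<forall>v\<in>V. 0 \<le> \<theta> v" using assms(2) by auto
  have c: "\<forall>v\<in>V. \<theta> v = 0 \<or> \<theta> v + (\<Sum>u\<in>{u\<in>V. adj V W u v}. \<theta> u) \<le> 1"
  proof
    fix v assume v: "v \<in> V"
    define s where "s = (\<Sum>u\<in>{u\<in>V. adj V W u v}. \<theta> u)"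
    have "{x::real. 0 \<le> x \<and> x + s \<ge> 1} = {max 0 (1 - s)..}" by auto
    then have "\<theta> v = max 0 (1 - s)"
      using assms(3) v unfolding stable_solution_def s_def by simp
    then show "\<theta> v = 0 \<or> \<theta> v + (\<Sum>u\<in>{u\<in>V. adj V W u v}. \<theta> u) \<le> 1"
      unfolding s_def[symmetric] by linarith
  qed
  obtain D where "\<forall>S\<in>set_pmf D. S \<subseteq> V \<and> (\<forall>u\<in>S. \<forall>v\<in>S. \<not> adj V W u v)"
    "\<forall>v\<in>V. measure_pmf.prob D {S. v \<in> S} = \<theta> v"
    using greedy[OF fin nn c sym irr] by blast
  then show ?thesis unfolding independent_set_def by blast
qed

end
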